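(* There exist finite category presentations $D$ and $E$ and a profunctor $\mathcal Q:[\![D]\!]\nrightarrow[\![E]\!]$ which is finitely uncurried presentable but not finitely curried presentable.
   Context: Category presentation $C$: sorts, function symbols $f:c\to c'$, set $C_E$ of equations between parallel paths (paths are composable lists $f_0.\cdots.f_{n-1}$ of function symbols or empty paths $1_c$); finite if these sets are finite. $\approx_C$: smallest equivalence relation on paths containing $C_E$ closed under concatenation with composable function symbols on either side; $[\![C]\!]$: objects sorts, morphisms $\approx_C$-classes $[p]$ of paths. Profunctors $\mathcal P:\mathcal C\nrightarrow\mathcal D$: categories over $\mathbf 2=\{0\to 1\}$ with fibres $\mathcal C,\mathcal D$; equivalently functors $\mathcal C^{op}\times\mathcal D\to\mathbf{Set}$, $\mathcal P(c,d)$ being the cross-morphisms $c\to d$. Isomorphism is taken in $\mathbf{Prof}(\mathcal C,\mathcal D)$ (functors over $\mathbf 2$ that are identities on $\mathcal C,\mathcal D$). Uncurried presentation $P:C\nrightarrow D$: a set $\mathrm{Fun}(P)$ of symbols $x:c\to d$ ($c\in\mathrm{Sort}(C)$, $d\in\mathrm{Sort}(D)$) and a set $P_E$ of equations between cross-paths (paths from a $C$-sort to a $D$-sort) of the category presentation $|P|$ with sorts $\mathrm{Sort}(C)+\mathrm{Sort}(D)$, symbols $\mathrm{Fun}(C)+\mathrm{Fun}(P)+\mathrm{Fun}(D)$, equations $C_E+P_E+D_E$. Finite if $C,D,\mathrm{Fun}(P),P_E$ are finite. Semantics $[\![P]\!]=[\![|P|]\!]$ over $\mathbf 2$. $\mathcal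 P$ is finitely uncurried presentable if $\mathcal P\cong[\![P]\!]$ for some finite uncurried $P:C\nrightarrow D$. Instance presentations: $1$ is the category presentation with one sort $*$ and no function symbols or equations. A $C$-instance presentation $I$ is an uncurried presentation $1\nrightarrow C$; its symbols $x:*\to c$ are called generators, written $x:c$; its cross-paths are terms, each of the form $x.g$ with $x$ a generator and $g$ a $C$-path. Finite if $\mathrm{Gen}(I)$ and $I_E$ are finite. $[\![I]\!]:[\![C]\!]\to\mathbf{Set}$ sends $c$ to the set of $\approx_I$-classes of terms of type $c$, with $[g]$ acting by $[t]\mapsto[t.g]$. A morphism $F:I\to J$ of $C$-instance presentations maps each generator $x:c$ of $I$ to a term $F(x):c$ of $J$ such that $F(x).g\approx_J F(y).h$ for every equation $x.g=y.h$ of $I_E$; it acts on terms by $F(x.g):=F(x).g$; and $F\approx G$ iff $F(x)\approx_J G(x)$ for all generators. Curried presentations: a curried profunctor presentation $P:C\nrightarrow D$ assigns to each sort $c$ of $C$ a $D$-instance presentation $P(c)$ and to each function symbol $f:c\to c'$ of $C$ a $D$-instance morphism $P(f):P(c')\to P(c)$, such that $P(p)\approx P(p')$ for each equation $p=p'$ of $C_E$, where $P(f_1.\cdots.f_n):=P(f_n)\circ\cdots\circ P(f_1)$ and $P(1_c)$ is the identity. It is finite if $C$, $D$ and all $P(c)$ are finite. Its semantics is the profunctor $[\![P]\!]:[\![C]\!]\nrightarrow[\![D]\!]$ with $[\![P]\!](c,d)=[\![P(c)]\!](d)$ and $[f]$ acting via $[\![P(f)]\!]$. $\mathcal P$ is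 finitely curried presentable if $\mathcal P\cong[\![P]\!]$ for some finite curried $P:C\nrightarrow D$. *)

theory Defs
  imports Main
begin

text \<open>A path is represented by its source sort together with the list of its function
symbols in diagrammatic order; the empty path 1_c is (c, []).\<close>
type_synonym ('s,'f) path = "'s \<times> 'f list"

record ('s,'f) catpres =
  Sorts :: "'s set"
  Funs  :: "'f set"
  fdom  :: "'f \<Rightarrow> 's"
  fcod  :: "'f \<Rightarrow> 's"
  Eqs   :: "(('s,'f) path \<times> ('s,'f) path) set"

fun chain :: "('s,'f,'m) catpres_scheme \<Rightarrow> 's \<Rightarrow> 'f list \<Rightarrow> bool" where
  "chain C c [] = True"
| "chain C c (f # fs) = (f \<in> Funs C \<and> fdom C f = c \<and> chain C (fcod C f) fs)"

fun pend :: "('s,'f,'m) catpres_scheme \<Rightarrow> 's \<Rightarrow> 'f list \<Rightarrow> 's" where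
  "pend C c [] = c"
| "pend C c (f # fs) = pend C (fcod C f) fs"

definition is_path :: "('s,'f,'m) catpres_scheme \<Rightarrow> 's \<Rightarrow> 's \<Rightarrow> ('s,'f) path \<Rightarrow> bool" where
  "is_path C c c' p \<longleftrightarrow> fst p = c \<and> c \<in> Sorts C \<and> chain C c (snd p) \<and> pend C c (snd p) = c'"

definition pcomp :: "('s,'f) path \<Rightarrow> ('s,'f) path \<Rightarrow> ('s,'f) path" where
  "pcomp p q = (fst p, snd p @ snd q)"

definition wf_catpres :: "('s,'f,'m) catpres_scheme \<Rightarrow> bool" where
  "wf_catpres C \<longleftrightarrow>
     (\<forall>f\<in>Funs C. fdom C f \<in> Sorts C \<and> fcod C f \<in> Sorts C) \<and>
     (\<forall>(p,q)\<in>Eqs C. \<exists>c c'. is_path C c c' p \<and> is_path C c c' q)"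

definition finite_catpres :: "('s,'f,'m) catpres_scheme \<Rightarrow> bool" where
  "finite_catpres C \<longleftrightarrow> finite (Sorts C) \<and> finite (Funs C) \<and> finite (Eqs C)"

inductive peq :: "('s,'f,'m) catpres_scheme \<Rightarrow> ('s,'f) path \<Rightarrow> ('s,'f) path \<Rightarrow> bool"
  for C where
  peq_eq:    "(p, q) \<in> Eqs C \<Longrightarrow> peq C p q"
| peq_refl:  "is_path C c c' p \<Longrightarrow> peq C p p"
| peq_sym:   "peq C p q \<Longrightarrow> peq C q p"
| peq_trans: "peq C p q \<Longrightarrow> peq C q r \<Longrightarrow> peq C p r"
| peq_right: "peq C p q \<Longrightarrow> is_path C c c' p \<Longrightarrow> f \<in> Funs C \<Longrightarrow> fdom C f = c' \<Longrightarrow>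
              peq C (pcomp p (c', [f])) (pcomp q (c', [f]))"
| peq_left:  "peq C p q \<Longrightarrow> is_path C c c' p \<Longrightarrow> f \<in> Funs C \<Longrightarrow> fcod C f = c \<Longrightarrow>
              peq C (pcomp (fdom C f, [f]) p) (pcomp (fdom C f, [f]) q)"

definition pclass :: "('s,'f,'m) catpres_scheme \<Rightarrow> ('s,'f) path \<Rightarrow> ('s,'f) path set" where
  "pclass C p = {q. peq C p q}"

text \<open>Morphisms of [[D]] are represented by paths; actions must respect \<approx>.
El c d is the set of cross-morphisms c -> d; Lact p acts contravariantly (p : c -> c'
sends El c' d to El c d), Ract q covariantly.\<close>
record ('s1,'f1,'s2,'f2,'x) prof =
  El   :: "'s1 \<Rightarrow> 's2 \<Rightarrow> 'x set"
  Lact :: "('s1,'f1) path \<Rightarrow> 's2 \<Rightarrow> 'x \<Rightarrow> 'x"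
  Ract :: "('s2,'f2) path \<Rightarrow> 's1 \<Rightarrow> 'x \<Rightarrow> 'x"

definition is_profunctor ::
  "('s1,'f1) catpres \<Rightarrow> ('s2,'f2) catpres \<Rightarrow> ('s1,'f1,'s2,'f2,'x) prof \<Rightarrow> bool" where
  "is_profunctor D E Q \<longleftrightarrow>
     (\<forall>p c c' d x. is_path D c c' p \<longrightarrow> d \<in> Sorts E \<longrightarrow> x \<in> El Q c' d \<longrightarrow>
        Lact Q p d x \<in> El Q c d) \<and>
     (\<forall>q d d' c x. is_path E d d' q \<longrightarrow> c \<in> Sorts D \<longrightarrow> x \<in> El Q c d \<longrightarrow>
        Ract Q q c x \<in> El Q c d') \<and>
     (\<forall>c d x. c \<in> Sorts D \<longrightarrow> d \<in> Sorts E \<longrightarrow> x \<in> El Q c d \<longrightarrow>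
        Lact Q (c, []) d x = x \<and> Ract Q (d, []) c x = x) \<and>
     (\<forall>p p' c c' c'' d x. is_path D c c' p \<longrightarrow> is_path D c' c'' p' \<longrightarrow> d \<in> Sorts E \<longrightarrow>
        x \<in> El Q c'' d \<longrightarrow> Lact Q (pcomp p p') d x = Lact Q p d (Lact Q p' d x)) \<and>
     (\<forall>q q' d d' d'' c x. is_path E d d' q \<longrightarrow> is_path E d' d'' q' \<longrightarrow> c \<in> Sorts D \<longrightarrow>
        x \<in> El Q c d \<longrightarrow> Ract Q (pcomp q q') c x = Ract Q q' c (Ract Q q c x)) \<and>
     (\<forall>p p' c c' d x. peq D p p' \<longrightarrow> is_path D c c' p \<longrightarrow> d \<in> Sorts E \<longrightarrow>
        x \<in> El Q c' d \<longrightarrow> Lact Q p d x = Lact Q p' d x) \<and>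
     (\<forall>q q' d d' c x. peq E q q' \<longrightarrow> is_path E d d' q \<longrightarrow> c \<in> Sorts D \<longrightarrow>
        x \<in> El Q c d \<longrightarrow> Ract Q q c x = Ract Q q' c x) \<and>
     (\<forall>p q c c' d d' x. is_path D c c' p \<longrightarrow> is_path E d d' q \<longrightarrow> x \<in> El Q c' d \<longrightarrow>
        Lact Q p d' (Ract Q q c' x) = Ract Q q c (Lact Q p d x))"

definition prof_iso ::
  "('s1,'f1) catpres \<Rightarrow> ('s2,'f2) catpres \<Rightarrow> ('s1,'f1,'s2,'f2,'x) prof \<Rightarrow>
   ('s1,'f1,'s2,'f2,'y) prof \<Rightarrow> bool" where
  "prof_iso D E Q Q' \<longleftrightarrow> (\<exists>\<phi> :: 's1 \<Rightarrow> 's2 \<Rightarrow> 'x \<Rightarrow> 'y.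
     (\<forall>c\<in>Sorts D. \<forall>d\<in>Sorts E. bij_betw (\<phi> c d) (El Q c d) (El Q' c d)) \<and>
     (\<forall>p c c' d x. is_path D c c' p \<longrightarrow> d \<in> Sorts E \<longrightarrow> x \<in> El Q c' d \<longrightarrow>
        \<phi> c d (Lact Q p d x) = Lact Q' p d (\<phi> c' d x)) \<and>
     (\<forall>q d d' c x. is_path E d d' q \<longrightarrow> c \<in> Sorts D \<longrightarrow> x \<in> El Q c d \<longrightarrow>
        \<phi> c d' (Ract Q q c x) = Ract Q' q c (\<phi> c d x)))"

text \<open>Symbols of |P| are Fun(C) + Fun(P) + Fun(D), encoded as 'f1 + ('g + 'f2).\<close>
record ('s1,'f1,'s2,'f2,'g) upres =
  Gens :: "'g set"
  gsrc :: "'g \<Rightarrow> 's1"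
  gtgt :: "'g \<Rightarrow> 's2"
  UEqs :: "((('s1 + 's2), ('f1 + 'g + 'f2)) path \<times> (('s1 + 's2), ('f1 + 'g + 'f2)) path) set"

definition liftL :: "('s1,'f1) path \<Rightarrow> ('s1 + 's2, 'f1 + 'g + 'f2) path" where
  "liftL p = (Inl (fst p), map Inl (snd p))"

definition liftR :: "('s2,'f2) path \<Rightarrow> ('s1 + 's2, 'f1 + 'g + 'f2) path" where
  "liftR p = (Inr (fst p), map (Inr \<circ> Inr) (snd p))"

definition total :: "('s1,'f1) catpres \<Rightarrow> ('s2,'f2) catpres \<Rightarrow> ('s1,'f1,'s2,'f2,'g) upres \<Rightarrow>
    ('s1 + 's2, 'f1 + 'g + 'f2) catpres" where
  "total D E P = \<lparr> Sorts = Inl ` Sorts D \<union> Inr ` Sorts E,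
     Funs = Inl ` Funs D \<union> (Inr \<circ> Inl) ` Gens P \<union> (Inr \<circ> Inr) ` Funs E,
     fdom = case_sum (\<lambda>f. Inl (fdom D f)) (case_sum (\<lambda>x. Inl (gsrc P x)) (\<lambda>f. Inr (fdom E f))),
     fcod = case_sum (\<lambda>f. Inl (fcod D f)) (case_sum (\<lambda>x. Inr (gtgt P x)) (\<lambda>f. Inr (fcod E f))),
     Eqs = (\<lambda>(p,q). (liftL p, liftL q)) ` Eqs D \<union> UEqs P \<union> (\<lambda>(p,q). (liftR p, liftR q)) ` Eqs E \<rparr>"

definition wf_upres :: "('s1,'f1) catpres \<Rightarrow> ('s2,'f2) catpres \<Rightarrow> ('s1,'f1,'s2,'f2,'g) upres \<Rightarrow> bool" where
  "wf_upres D E P \<longleftrightarrow> wf_catpres D \<and> wf_catpres E \<and>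
     (\<forall>x\<in>Gens P. gsrc P x \<in> Sorts D \<and> gtgt P x \<in> Sorts E) \<and>
     (\<forall>(p,q)\<in>UEqs P. \<exists>c d. is_path (total D E P) (Inl c) (Inr d) p \<and>
                            is_path (total D E P) (Inl c) (Inr d) q)"

definition finite_upres :: "('s1,'f1) catpres \<Rightarrow> ('s2,'f2) catpres \<Rightarrow> ('s1,'f1,'s2,'f2,'g) upres \<Rightarrow> bool" where
  "finite_upres D E P \<longleftrightarrow> finite_catpres D \<and> finite_catpres E \<and> finite (Gens P) \<and> finite (UEqs P)"

text \<open>Semantics [[P]] = [[|P|]] over 2: cross-morphisms are \<approx>-classes of cross-paths.\<close>
definition usem :: "('s1,'f1) catpres \<Rightarrow> ('s2,'f2) catpres \<Rightarrow> ('s1,'f1,'s2,'f2,'g) upres \<Rightarrow>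
    ('s1,'f1,'s2,'f2, ('s1 + 's2, 'f1 + 'g + 'f2) path set) prof" where
  "usem D E P = \<lparr> El = (\<lambda>c d. {pclass (total D E P) r | r. is_path (total D E P) (Inl c) (Inr d) r}),
     Lact = (\<lambda>p d X. \<Union>r\<in>X. pclass (total D E P) (pcomp (liftL p) r)),
     Ract = (\<lambda>q c X. \<Union>r\<in>X. pclass (total D E P) (pcomp r (liftR q))) \<rparr>"

definition fin_uncurried_presentable ::
  "('s1,'f1) catpres \<Rightarrow> ('s2,'f2) catpres \<Rightarrow> ('s1,'f1,'s2,'f2,'x) prof \<Rightarrow> bool" where
  "fin_uncurried_presentable D E Q \<longleftrightarrow>
     (\<exists>P :: ('s1,'f1,'s2,'f2,nat) upres. wf_upres D E P \<and> finite_upres D E P \<and>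
        prof_iso D E Q (usem D E P))"

definition unit_pres :: "(unit, unit) catpres" where
  "unit_pres = \<lparr> Sorts = {()}, Funs = {}, fdom = (\<lambda>_. ()), fcod = (\<lambda>_. ()), Eqs = {} \<rparr>"

text \<open>An E-instance presentation is an uncurried presentation 1 -/-> E.\<close>
type_synonym ('s2,'f2,'g) ipres = "(unit, unit, 's2, 'f2, 'g) upres"
type_synonym ('s2,'f2,'g) iterm = "(unit + 's2, unit + 'g + 'f2) path"

definition gterm :: "'g \<Rightarrow> ('s2,'f2,'g) iterm" where
  "gterm x = (Inl (), [Inr (Inl x)])"

text \<open>Action of an instance morphism on terms: F(x.g) := F(x).g\<close>
fun imor_app :: "('g \<Rightarrow> ('s2,'f2,'g) iterm) \<Rightarrow> ('s2,'f2,'g) iterm \<Rightarrow> ('s2,'f2,'g) iterm" where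
  "imor_app F (a, Inr (Inl x) # rest) = (fst (F x), snd (F x) @ rest)"
| "imor_app F t = t"

definition is_imor :: "('s2,'f2) catpres \<Rightarrow> ('s2,'f2,'g) ipres \<Rightarrow> ('s2,'f2,'g) ipres \<Rightarrow>
    ('g \<Rightarrow> ('s2,'f2,'g) iterm) \<Rightarrow> bool" where
  "is_imor E I J F \<longleftrightarrow>
     (\<forall>x\<in>Gens I. is_path (total unit_pres E J) (Inl ()) (Inr (gtgt I x)) (F x)) \<and>
     (\<forall>(t,t')\<in>UEqs I. peq (total unit_pres E J) (imor_app F t) (imor_app F t'))"

record ('s1,'f1,'s2,'f2,'g) cpres =
  Obj :: "'s1 \<Rightarrow> ('s2,'f2,'g) ipres"
  Mor :: "'f1 \<Rightarrow> 'g \<Rightarrow> ('s2,'f2,'g) iterm"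

text \<open>P(f_1 ... f_n) applied to a term: P(f_n) is applied first, P(f_1) last.\<close>
fun cact :: "('s1,'f1,'s2,'f2,'g) cpres \<Rightarrow> 'f1 list \<Rightarrow> ('s2,'f2,'g) iterm \<Rightarrow> ('s2,'f2,'g) iterm" where
  "cact P [] t = t"
| "cact P (f # fs) t = imor_app (Mor P f) (cact P fs t)"

definition wf_cpres :: "('s1,'f1) catpres \<Rightarrow> ('s2,'f2) catpres \<Rightarrow> ('s1,'f1,'s2,'f2,'g) cpres \<Rightarrow> bool" where
  "wf_cpres D E P \<longleftrightarrow> wf_catpres D \<and> wf_catpres E \<and>
     (\<forall>c\<in>Sorts D. wf_upres unit_pres E (Obj P c)) \<and>
     (\<forall>f\<in>Funs D. is_imor E (Obj P (fcod D f)) (Obj P (fdom D f)) (Mor P f)) \<and>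
     (\<forall>(p,p')\<in>Eqs D. \<forall>x\<in>Gens (Obj P (pend D (fst p) (snd p))).
        peq (total unit_pres E (Obj P (fst p))) (cact P (snd p) (gterm x)) (cact P (snd p') (gterm x)))"

definition finite_cpres :: "('s1,'f1) catpres \<Rightarrow> ('s2,'f2) catpres \<Rightarrow> ('s1,'f1,'s2,'f2,'g) cpres \<Rightarrow> bool" where
  "finite_cpres D E P \<longleftrightarrow> finite_catpres D \<and> finite_catpres E \<and>
     (\<forall>c\<in>Sorts D. finite (Gens (Obj P c)) \<and> finite (UEqs (Obj P c)))"

definition csem :: "('s1,'f1) catpres \<Rightarrow> ('s2,'f2) catpres \<Rightarrow> ('s1,'f1,'s2,'f2,'g) cpres \<Rightarrow>
    ('s1,'f1,'s2,'f2, ('s2,'f2,'g) iterm set) prof" where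
  "csem D E P = \<lparr>
     El = (\<lambda>c d. {pclass (total unit_pres E (Obj P c)) t | t.
                     is_path (total unit_pres E (Obj P c)) (Inl ()) (Inr d) t}),
     Lact = (\<lambda>p d X. \<Union>t\<in>X. pclass (total unit_pres E (Obj P (fst p))) (cact P (snd p) t)),
     Ract = (\<lambda>q c X. \<Union>t\<in>X. pclass (total unit_pres E (Obj P c)) (pcomp t (liftR q))) \<rparr>"

definition fin_curried_presentable ::
  "('s1,'f1) catpres \<Rightarrow> ('s2,'f2) catpres \<Rightarrow> ('s1,'f1,'s2,'f2,'x) prof \<Rightarrow> bool" where
  "fin_curried_presentable D E Q \<longleftrightarrow>
     (\<exists>P :: ('s1,'f1,'s2,'f2,nat) cpres. wf_cpres D E P \<and> finite_cpres D E P \<and>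
        prof_iso D E Q (csem D E P))"

end

theory Submission imports Defs begin

definition D0 :: "(nat,nat) catpres" where
  "D0 = \<lparr>Sorts = {0}, Funs = {0}, fdom = (\<lambda>_. 0), fcod = (\<lambda>_. 0), Eqs = {}\<rparr>"
definition E0 :: "(nat,nat) catpres" where
  "E0 = \<lparr>Sorts = {0}, Funs = {}, fdom = (\<lambda>_. 0), fcod = (\<lambda>_. 0), Eqs = {}\<rparr>"
definition P0 :: "(nat,nat,nat,nat,nat) upres" where
  "P0 = \<lparr>Gens = {0}, gsrc = (\<lambda>_. 0), gtgt = (\<lambda>_. 0), UEqs = {}\<rparr>"
abbreviation "T0 \<equiv> total D0 E0 P0"
abbreviation "Q0 \<equiv> usem D0 E0 P0"

lemma peq_empty0: "peq C p q \<Longrightarrow> Eqs C = {} \<Longrightarrow> p = q"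
  by (induction rule: peq.induct) auto
lemma peq_empty: "Eqs C = {} \<Longrightarrow> peq C p q \<Longrightarrow> p = q"
  by (rule peq_empty0)

lemma pclass_single: "Eqs C = {} \<Longrightarrow> is_path C c c' p \<Longrightarrow> pclass C p = {p}"
proof -
  assume e: "Eqs C = {}" and p: "is_path C c c' p"
  have "peq C p p" by (rule peq_refl[OF p])
  moreover have "\<And>q. peq C p q \<Longrightarrow> q = p" using peq_empty0 e by metis
  ultimately show ?thesis unfolding pclass_def by auto
qed

lemma chain_app: "chain C c (xs @ ys) = (chain C c xs \<and> chain C (pend C c xs) ys)"
  by (induction xs arbitrary: c) auto
lemma pend_app: "pend C c (xs @ ys) = pend C (pend C c xs) ys"
  by (induction xs arbitrary: c) auto

lemma is_path_pcomp: "is_path C a b p \<Longrightarrow> is_path C b e q \<Longrightarrow> is_path C a e (pcomp p q)"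
  unfolding is_path_def pcomp_def by (auto simp: chain_app pend_app)

lemma total_sel:
  "Sorts (total D E P) = Inl ` Sorts D \<union> Inr ` Sorts E"
  "Funs (total D E P) = Inl ` Funs D \<union> (Inr \<circ> Inl) ` Gens P \<union> (Inr \<circ> Inr) ` Funs E"
  "fdom (total D E P) (Inl f) = Inl (fdom D f)"
  "fdom (total D E P) (Inr (Inl x)) = Inl (gsrc P x)"
  "fdom (total D E P) (Inr (Inr g)) = Inr (fdom E g)"
  "fcod (total D E P) (Inl f) = Inl (fcod D f)"
  "fcod (total D E P) (Inr (Inl x)) = Inr (gtgt P x)"
  "fcod (total D E P) (Inr (Inr g)) = Inr (fcod E g)"
  by (simp_all add: total_def)

lemma chain_liftL: "chain D c fs \<Longrightarrow> chain (total D E P) (Inl c) (map Inl fs) \<and>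
   pend (total D E P) (Inl c) (map Inl fs) = Inl (pend D c fs)"
  by (induction fs arbitrary: c) (auto simp: total_sel)

lemma is_path_liftL: "is_path D c c' p \<Longrightarrow> is_path (total D E P) (Inl c) (Inl c') (liftL p)"
proof -
  assume a: "is_path D c c' p"
  then have "chain D c (snd p)" "fst p = c" "c \<in> Sorts D" "pend D c (snd p) = c'"
    by (simp_all add: is_path_def)
  then show ?thesis using chain_liftL[of D c "snd p" E P]
    by (simp add: is_path_def liftL_def total_sel)
qed

lemma T0_eqs: "Eqs T0 = {}" by (simp add: total_def D0_def E0_def P0_def)

lemma El_Q0: "El Q0 c d = {{r}|r. is_path T0 (Inl c) (Inr d) r}"
proof -
  have H: "\<And>r. is_path T0 (Inl c) (Inr d) r \<Longrightarrow> pclass T0 r = {r}"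
    using pclass_single[OF T0_eqs] by blast
  show ?thesis unfolding usem_def prof.simps
  proof (rule set_eqI, rule iffI)
    fix X assume "X \<in> {pclass T0 r |r. is_path T0 (Inl c) (Inr d) r}"
    then obtain r where r: "X = pclass T0 r" "is_path T0 (Inl c) (Inr d) r" by blast
    then have "X = {r}" using H by simp
    with r(2) show "X \<in> {{r} |r. is_path T0 (Inl c) (Inr d) r}" by blast
  next
    fix X assume "X \<in> {{r} |r. is_path T0 (Inl c) (Inr d) r}"
    then obtain r where r: "X = {r}" "is_path T0 (Inl c) (Inr d) r" by blast
    then have "X = pclass T0 r" using H by simp
    with r(2) show "X \<in> {pclass T0 r |r. is_path T0 (Inl c) (Inr d) r}" by blast
  qed
qed

lemma E0_path: "is_path E0 d d' q \<Longrightarrow> q = (d,[]) \<and> d' = d"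
  unfolding is_path_def by (cases q; cases "snd q") (auto simp: E0_def)

lemma Lact_Q0: "is_path D0 c c' p \<Longrightarrow> is_path T0 (Inl c') (Inr d) r \<Longrightarrow>
   Lact Q0 p d {r} = {pcomp (liftL p) r} \<and> is_path T0 (Inl c) (Inr d) (pcomp (liftL p) r)"
proof -
  assume a: "is_path D0 c c' p" and b: "is_path T0 (Inl c') (Inr d) r"
  have pth: "is_path T0 (Inl c) (Inr d) (pcomp (liftL p) r)"
    by (rule is_path_pcomp[OF is_path_liftL[OF a] b])
  then have "pclass T0 (pcomp (liftL p) r) = {pcomp (liftL p) r}" by (rule pclass_single[OF T0_eqs])
  then show ?thesis using pth by (simp add: usem_def)
qed

lemma Ract_Q0: "is_path T0 a b r \<Longrightarrow> Ract Q0 (d,[]) c {r} = {r}"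
  using pclass_single[OF T0_eqs] by (simp add: usem_def liftR_def pcomp_def)

lemma pcomp_nil: "fst r = a \<Longrightarrow> pcomp (a, []) r = r"
  by (cases r) (simp add: pcomp_def)
lemma pcomp_assoc: "pcomp (pcomp a b) c = pcomp a (pcomp b c)" by (simp add: pcomp_def)
lemma liftL_pcomp: "liftL (pcomp p p') = pcomp (liftL p) (liftL p')" by (simp add: liftL_def pcomp_def)

lemma prof_Q0: "is_profunctor D0 E0 Q0"
  unfolding is_profunctor_def El_Q0
proof (intro conjI allI impI)
  show "Lact Q0 p d x \<in> {{r} |r. is_path T0 (Inl c) (Inr d) r}"
    if "is_path D0 c c' p" "d \<in> Sorts E0" "x \<in> {{r} |r. is_path T0 (Inl c') (Inr d) r}" for p c c' d x
    using that Lact_Q0 by blast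
  show "Ract Q0 q c x \<in> {{r} |r. is_path T0 (Inl c) (Inr d') r}"
    if "is_path E0 d d' q" "c \<in> Sorts D0" "x \<in> {{r} |r. is_path T0 (Inl c) (Inr d) r}" for q d d' c x
    using that E0_path Ract_Q0 by blast
  fix c d x assume "c \<in> Sorts D0" "d \<in> Sorts E0" "x \<in> {{r} |r. is_path T0 (Inl c) (Inr d) r}"
  then obtain r where r: "x = {r}" "is_path T0 (Inl c) (Inr d) r" by blast
  have "fst r = Inl c" using r by (simp add: is_path_def)
  then have "pcomp (liftL (c, [])) r = r" by (cases r) (simp add: liftL_def pcomp_def)
  then show "Lact Q0 (c, []) d x = x" using r pclass_single[OF T0_eqs]
    by (simp add: usem_def)
  show "Ract Q0 (d, []) c x = x" using r Ract_Q0 by simp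
next
  fix p p' c c' c'' d x
  assume a: "is_path D0 c c' p" "is_path D0 c' c'' p'" "d \<in> Sorts E0"
    "x \<in> {{r} |r. is_path T0 (Inl c'') (Inr d) r}"
  then obtain r where r: "x = {r}" "is_path T0 (Inl c'') (Inr d) r" by blast
  have pp: "is_path D0 c c'' (pcomp p p')" by (rule is_path_pcomp[OF a(1) a(2)])
  show "Lact Q0 (pcomp p p') d x = Lact Q0 p d (Lact Q0 p' d x)"
    using Lact_Q0[OF pp r(2)] Lact_Q0[OF a(2) r(2)] Lact_Q0[OF a(1)] r
    by (simp add: liftL_pcomp pcomp_assoc)
next
  fix q q' d d' d'' c x
  assume a: "is_path E0 d d' q" "is_path E0 d' d'' q'" "c \<in> Sorts D0"
    "x \<in> {{r} |r. is_path T0 (Inl c) (Inr d) r}"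
  then obtain r where r: "x = {r}" "is_path T0 (Inl c) (Inr d) r" by blast
  show "Ract Q0 (pcomp q q') c x = Ract Q0 q' c (Ract Q0 q c x)"
    using E0_path[OF a(1)] E0_path[OF a(2)] r Ract_Q0 by (simp add: pcomp_def)
next
  fix p p' :: "(nat,nat) path" and c c' d x
  assume "peq D0 p p'"
  then have "p = p'" by (rule peq_empty[rotated]) (simp add: D0_def)
  then show "Lact Q0 p d x = Lact Q0 p' d x" by simp
next
  fix q q' :: "(nat,nat) path" and c d d' x
  assume "peq E0 q q'"
  then have "q = q'" by (rule peq_empty[rotated]) (simp add: E0_def)
  then show "Ract Q0 q c x = Ract Q0 q' c x" by simp
next
  fix p q c c' d d' x
  assume a: "is_path D0 c c' p" "is_path E0 d d' q" "x \<in> {{r} |r. is_path T0 (Inl c') (Inr d) r}"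
  then obtain r where r: "x = {r}" "is_path T0 (Inl c') (Inr d) r" by blast
  show "Lact Q0 p d' (Ract Q0 q c' x) = Ract Q0 q c (Lact Q0 p d x)"
  proof -
    have q: "q = (d, [])" "d' = d" using E0_path[OF a(2)] by auto
    have L: "Lact Q0 p d {r} = {pcomp (liftL p) r}" "is_path T0 (Inl c) (Inr d) (pcomp (liftL p) r)"
      using Lact_Q0[OF a(1) r(2)] by auto
    have "Ract Q0 q c' x = x" using q r Ract_Q0 by simp
    moreover have "Ract Q0 q c (Lact Q0 p d x) = Lact Q0 p d x"
      using q r L Ract_Q0[OF L(2)] by simp
    ultimately show ?thesis using q by simp
  qed
qed

definition rr :: "nat \<Rightarrow> (nat + nat, nat + nat + nat) path" where
  "rr n = (Inl 0, replicate n (Inl 0) @ [Inr (Inl 0)])"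

lemma chain_rep: "chain T0 (Inl 0) (replicate n (Inl 0)) \<and> pend T0 (Inl 0) (replicate n (Inl 0)) = Inl 0"
  by (induction n) (auto simp: total_def D0_def)

lemma rr_path: "is_path T0 (Inl 0) (Inr 0) (rr n)"
  using chain_rep[of n] unfolding is_path_def rr_def
  by (auto simp: chain_app pend_app total_def D0_def E0_def P0_def)

lemma El_Q0_inf: "infinite (El Q0 0 0)"
proof -
  have "inj (\<lambda>n. {rr n})" by (auto simp: inj_def rr_def)
  then have "infinite (range (\<lambda>n. {rr n}))" by (metis finite_imageD infinite_UNIV_nat)
  moreover have "range (\<lambda>n. {rr n}) \<subseteq> El Q0 0 0" unfolding El_Q0 using rr_path by blast
  ultimately show ?thesis using infinite_super by blast
qed

lemma funs_T1: "f \<in> Funs (total unit_pres E0 I) \<Longrightarrow> \<exists>x\<in>Gens I. f = Inr (Inl x)"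
  by (simp add: total_def unit_pres_def E0_def) blast

lemma fdom_T1: "fdom (total unit_pres E0 I) (Inr (Inl x)) = Inl ()"
  by (simp add: total_def)

lemma chain_T1: "chain (total unit_pres E0 I) (Inr d) fs \<Longrightarrow> fs = []"
  by (cases fs) (auto dest!: funs_T1 simp: fdom_T1)

lemma csem_path: "is_path (total unit_pres E0 I) (Inl ()) (Inr 0) t \<Longrightarrow>
   t \<in> (\<lambda>x. (Inl (), [Inr (Inl x)])) ` Gens I"
proof -
  assume a: "is_path (total unit_pres E0 I) (Inl ()) (Inr 0) t"
  obtain a0 fs where t: "t = (a0, fs)" by fastforce
  show ?thesis
  proof (cases fs)
    case Nil then show ?thesis using a t by (simp add: is_path_def)
  next
    case (Cons f gs)
    have c: "chain (total unit_pres E0 I) (Inl ()) (f # gs)" and a0: "a0 = Inl ()"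
      using a t Cons by (simp_all add: is_path_def)
    then have f: "f \<in> Funs (total unit_pres E0 I)" by simp
    then obtain x where x: "x \<in> Gens I" "f = Inr (Inl x)" using funs_T1 by blast
    have "fcod (total unit_pres E0 I) f = Inr (gtgt I x)" using x by (simp add: total_def)
    then have "chain (total unit_pres E0 I) (Inr (gtgt I x)) gs" using c by simp
    then have "gs = []" by (rule chain_T1)
    then show ?thesis using t Cons a0 x by simp
  qed
qed

lemma El_csem_fin: "finite (Gens (Obj P 0)) \<Longrightarrow> finite (El (csem D0 E0 P) 0 0)"
proof -
  assume f: "finite (Gens (Obj P 0))"
  let ?T = "total unit_pres E0 (Obj P 0)"
  have "El (csem D0 E0 P) 0 0 \<subseteq> pclass ?T ` ((\<lambda>x. (Inl (), [Inr (Inl x)])) ` Gens (Obj P 0))"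
    unfolding csem_def prof.simps using csem_path by blast
  then show ?thesis by (rule finite_subset) (intro finite_imageI f)
qed

theorem mainTheorem7:
  shows "\<exists>(D :: (nat, nat) catpres) (E :: (nat, nat) catpres)
            (Q :: (nat, nat, nat, nat, (nat + nat, nat + nat + nat) path set) prof).
           wf_catpres D \<and> finite_catpres D \<and> wf_catpres E \<and> finite_catpres E \<and>
           is_profunctor D E Q \<and>
           fin_uncurried_presentable D E Q \<and> \<not> fin_curried_presentable D E Q"
proof (intro exI conjI)
  show w1: "wf_catpres D0" by (simp add: wf_catpres_def D0_def)
  show "finite_catpres D0" by (simp add: finite_catpres_def D0_def)
  show w2: "wf_catpres E0" by (simp add: wf_catpres_def E0_def)
  show "finite_catpres E0" by (simp add: finite_catpres_def E0_def)
  show "is_profunctor D0 E0 Q0" by (rule prof_Q0)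
  have "wf_upres D0 E0 P0" using w1 w2 by (simp add: wf_upres_def P0_def D0_def E0_def)
  moreover have "finite_upres D0 E0 P0"
    by (simp add: finite_upres_def finite_catpres_def P0_def D0_def E0_def)
  moreover have "prof_iso D0 E0 Q0 Q0"
    unfolding prof_iso_def by (rule exI[of _ "\<lambda>c d x. x"]) (simp add: bij_betw_id[unfolded id_def])
  ultimately show "fin_uncurried_presentable D0 E0 Q0"
    unfolding fin_uncurried_presentable_def by blast
  show "\<not> fin_curried_presentable D0 E0 Q0"
  proof (rule notI)
    assume "fin_curried_presentable D0 E0 Q0"
    then have "\<exists>P :: (nat,nat,nat,nat,nat) cpres. wf_cpres D0 E0 P \<and> finite_cpres D0 E0 P \<and>
        prof_iso D0 E0 Q0 (csem D0 E0 P)" unfolding fin_curried_presentable_def .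
    then obtain P :: "(nat,nat,nat,nat,nat) cpres" where
      P1: "finite_cpres D0 E0 P" and P2: "prof_iso D0 E0 Q0 (csem D0 E0 P)" by blast
    from P2 obtain \<phi> where ph: "\<forall>c\<in>Sorts D0. \<forall>d\<in>Sorts E0. bij_betw (\<phi> c d) (El Q0 c d) (El (csem D0 E0 P) c d)"
      unfolding prof_iso_def by blast
    have s: "(0::nat) \<in> Sorts D0" "(0::nat) \<in> Sorts E0" by (simp_all add: D0_def E0_def)
    have b: "bij_betw (\<phi> 0 0) (El Q0 0 0) (El (csem D0 E0 P) 0 0)"
      using ph s by blast
    have g: "finite (Gens (Obj P 0))" using P1 s(1) unfolding finite_cpres_def by blast
    have "finite (El (csem D0 E0 P) 0 0)" by (rule El_csem_fin[OF g])
    then have "finite (El Q0 0 0)" using bij_betw_finite[OF b] by simp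
    then show False using El_Q0_inf by simp
  qed
qed

end
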